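(* Suppose $h=h^{(0)}::h^{(1)}$ is the concatenation of two constant $\ell$-bit streams and $x$ is a uniformly distributed $\ell$-bit stream. Then (a) $G(h\vdash x\boxplus h)_\ell=2^{|\kappa h|-\ell}$; (b) $G(x,h\vdash x\boxplus h)=G(x^{\circledast\kappa h},h\vdash x\boxplus h)$.
   Context: For $x\in\mathbb{Z}_2^\ell$ and $h=h^{(0)}::h^{(1)}$ with $h^{(0)},h^{(1)}\in\mathbb{Z}_2^\ell$, $(x\boxplus h)_i=h^{(x_i)}_i$. The kernel is $\kappa h=\{i\mid h^{(0)}_i=h^{(1)}_i\}$. For $I\subseteq\{0,\dots,\ell-1\}$, $x^{\circledast I}$ is the string obtained from $x$ by replacing each bit $x_i$, $i\in I$, by a wildcard symbol $\circledast$. $G(\Xi\vdash\Theta)$ is the guessing chance: the maximal (over randomized guessing functions) fraction of random choices of the random values (here $x$) for which the function outputs $\Theta$ on input $\Xi$, as a sequence in $\ell$ considered up to negligible difference. *)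

theory Defs
  imports "HOL-Probability.Probability"
begin

definition bitstrings :: "nat \<Rightarrow> bool list set" where
  "bitstrings l = {xs. length xs = l}"

text \<open>h = h0 :: h1 is represented as the pair (h0, h1).\<close>

definition boxplus :: "bool list \<Rightarrow> bool list \<times> bool list \<Rightarrow> bool list" where
  "boxplus x h = map (\<lambda>i. if x ! i then snd h ! i else fst h ! i) [0..<length x]"

definition kernel :: "bool list \<times> bool list \<Rightarrow> nat set" where
  "kernel h = {i. i < length (fst h) \<and> fst h ! i = snd h ! i}"

text \<open>Wildcard substitution: None is the wildcard symbol, Some b a revealed bit.\<close>

definition wildcard :: "bool list \<Rightarrow> nat set \<Rightarrow> bool option list" where
  "wildcard x I = map (\<lambda>i. if i \<in> I then None else Some (x ! i)) [0..<length x]"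

text \<open>Guessing chance, as a sequence in l: x is uniform over l-bit strings; Xi l x is the
  input and Theta l x the value to be guessed; the supremum ranges over randomized guessing
  functions (input to a distribution over outputs); the success probability is taken over
  x and the internal randomness of the guesser.\<close>

definition guess_chance ::
  "(nat \<Rightarrow> bool list \<Rightarrow> 'i) \<Rightarrow> (nat \<Rightarrow> bool list \<Rightarrow> 'o) \<Rightarrow> nat \<Rightarrow> real" where
  "guess_chance Xi Theta l =
     (SUP f :: 'i \<Rightarrow> 'o pmf.
        measure_pmf.expectation (pmf_of_set (bitstrings l)) (\<lambda>x. pmf (f (Xi l x)) (Theta l x)))"

definition negligible :: "(nat \<Rightarrow> real) \<Rightarrow> bool" where
  "negligible e \<longleftrightarrow> (\<forall>c::nat. (\<lambda>n. real n ^ c * \<bar>e n\<bar>) \<longlonglongrightarrow> 0)"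

definition neg_eq :: "(nat \<Rightarrow> real) \<Rightarrow> (nat \<Rightarrow> real) \<Rightarrow> bool" where
  "neg_eq a b \<longleftrightarrow> negligible (\<lambda>n. a n - b n)"

end

theory Submission
  imports Defs
begin

lemma bitstrings_fin: "finite (bitstrings l)"
proof -
  have "bitstrings l = {xs. set xs \<subseteq> (UNIV::bool set) \<and> length xs = l}"
    by (auto simp: bitstrings_def)
  thus ?thesis using finite_lists_length_eq[of "UNIV::bool set" l] by simp
qed

lemma bitstrings_card: "card (bitstrings l) = 2 ^ l"
proof -
  have "bitstrings l = {xs. set xs \<subseteq> (UNIV::bool set) \<and> length xs = l}"
    by (auto simp: bitstrings_def)
  thus ?thesis using card_lists_length_eq[of "UNIV::bool set" l] by simp
qed

lemma bitstrings_ne: "bitstrings l \<noteq> {}"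
proof -
  have "replicate l False \<in> bitstrings l" by (simp add: bitstrings_def)
  thus ?thesis by auto
qed

lemma sup_attained:
  fixes F :: "'a \<Rightarrow> real"
  assumes "F f0 = z" "\<And>f. F f \<le> z"
  shows "(SUP f. F f) = z"
  by (rule cSup_eq_maximum) (use assms in auto)

lemma exp_le1:
  "measure_pmf.expectation (pmf_of_set (bitstrings l)) (\<lambda>x. pmf (f x) (g x)) \<le> 1"
proof -
  have "(\<Sum>x\<in>bitstrings l. pmf (f x) (g x)) \<le> (\<Sum>x\<in>bitstrings l. 1)"
    by (rule sum_mono) (simp add: pmf_le_1)
  thus ?thesis
    by (simp add: integral_pmf_of_set bitstrings_fin bitstrings_ne bitstrings_card)
qed

lemma count_fix:
  fixes c :: "bool list"
  shows "card {x. length x = n \<and> (\<forall>i<n. i \<notin> K \<longrightarrow> x!i = c!i)} = 2 ^ card (K \<inter> {..<n})"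
proof (induction n)
  case 0
  have "{x::bool list. length x = 0 \<and> (\<forall>i<0. i \<notin> K \<longrightarrow> x!i = c!i)} = {[]}" by auto
  thus ?case by simp
next
  case (Suc n)
  define S where "S m = {x::bool list. length x = m \<and> (\<forall>i<m. i \<notin> K \<longrightarrow> x!i = c!i)}" for m
  define B where "B = (if n \<in> K then (UNIV::bool set) else {c!n})"
  have eq: "S (Suc n) = (\<lambda>(xs,b). xs@[b]) ` (S n \<times> B)"
  proof
    show "S (Suc n) \<subseteq> (\<lambda>(xs,b). xs@[b]) ` (S n \<times> B)"
    proof
      fix x assume x: "x \<in> S (Suc n)"
      then have "x \<noteq> []" by (auto simp: S_def)
      then obtain ys b where xy: "x = ys @ [b]" by (metis rev_exhaust)
      have "ys \<in> S n" unfolding S_def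
      proof (intro CollectI conjI allI impI)
        show "length ys = n" using x xy by (simp add: S_def)
        fix i assume i: "i < n" "i \<notin> K"
        hence "x!i = c!i" using x by (simp add: S_def)
        thus "ys!i = c!i" using xy i \<open>length ys = n\<close> by (simp add: nth_append)
      qed
      moreover have "b \<in> B" using x xy unfolding S_def B_def by auto
      ultimately show "x \<in> (\<lambda>(xs,b). xs@[b]) ` (S n \<times> B)" using xy by auto
    qed
  next
    show "(\<lambda>(xs,b). xs@[b]) ` (S n \<times> B) \<subseteq> S (Suc n)"
      unfolding S_def B_def by (auto simp: nth_append less_Suc_eq split: if_splits)
  qed
  have inj: "inj_on (\<lambda>(xs,b). xs@[b]) (S n \<times> B)"
    by (auto simp: inj_on_def)
  have cS: "card (S (Suc n)) = card (S n) * card B"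
    using eq card_image[OF inj] by (simp add: card_cartesian_product)
  have cB: "card B = (if n \<in> K then 2 else 1)" by (simp add: B_def)
  have KK: "K \<inter> {..<Suc n} = (if n \<in> K then insert n (K \<inter> {..<n}) else K \<inter> {..<n})"
    by (auto simp: less_Suc_eq)
  show ?case using Suc.IH cS cB KK unfolding S_def by (simp add: card_insert_if)
qed

lemma box_eq:
  assumes "length x = l" "length x0 = l" "length (fst hh) = l" "length (snd hh) = l"
  shows "boxplus x hh = boxplus x0 hh \<longleftrightarrow> (\<forall>i<l. i \<notin> kernel hh \<longrightarrow> x!i = x0!i)"
proof -
  have "boxplus x hh = boxplus x0 hh \<longleftrightarrow>
     (\<forall>i<l. (if x ! i then snd hh ! i else fst hh ! i) = (if x0 ! i then snd hh ! i else fst hh ! i))"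
    using assms by (auto simp: boxplus_def list_eq_iff_nth_eq)
  also have "\<dots> \<longleftrightarrow> (\<forall>i<l. i \<notin> kernel hh \<longrightarrow> x!i = x0!i)"
    using assms by (auto simp: kernel_def)
  finally show ?thesis .
qed

lemma preimage_card:
  assumes "x0 \<in> bitstrings l" "length (fst hh) = l" "length (snd hh) = l"
  shows "card {x \<in> bitstrings l. boxplus x hh = boxplus x0 hh} = 2 ^ card (kernel hh)"
proof -
  have "{x \<in> bitstrings l. boxplus x hh = boxplus x0 hh} =
        {x. length x = l \<and> (\<forall>i<l. i \<notin> kernel hh \<longrightarrow> x!i = x0!i)}"
    using assms box_eq[of _ l x0 hh] by (auto simp: bitstrings_def)
  moreover have "kernel hh \<inter> {..<l} = kernel hh" using assms(2) by (auto simp: kernel_def)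
  ultimately show ?thesis using count_fix[of l "kernel hh" x0] by simp
qed

lemma sum_decomp:
  assumes "length (fst hh) = l" "length (snd hh) = l"
  shows "(\<Sum>x\<in>bitstrings l. pmf p (boxplus x hh)) =
         2 ^ card (kernel hh) * (\<Sum>y\<in>(\<lambda>x. boxplus x hh) ` bitstrings l. pmf p y)"
proof -
  let ?A = "bitstrings l" and ?b = "\<lambda>x. boxplus x hh"
  have "(\<Sum>x\<in>?A. pmf p (?b x)) = (\<Sum>y\<in>?b ` ?A. \<Sum>x\<in>{x \<in> ?A. ?b x = y}. pmf p (?b x))"
    by (rule sum.image_gen[OF bitstrings_fin])
  also have "\<dots> = (\<Sum>y\<in>?b ` ?A. 2 ^ card (kernel hh) * pmf p y)"
  proof (rule sum.cong[OF refl])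
    fix y assume "y \<in> ?b ` ?A"
    then obtain x0 where x0: "x0 \<in> ?A" "y = ?b x0" by auto
    have "(\<Sum>x\<in>{x \<in> ?A. ?b x = y}. pmf p (?b x)) = (\<Sum>x\<in>{x \<in> ?A. ?b x = y}. pmf p y)"
      by (rule sum.cong) auto
    also have "\<dots> = card {x \<in> ?A. ?b x = y} * pmf p y" by simp
    also have "card {x \<in> ?A. ?b x = y} = 2 ^ card (kernel hh)"
      using preimage_card[OF x0(1) assms] x0(2) by simp
    finally show "(\<Sum>x\<in>{x \<in> ?A. ?b x = y}. pmf p (?b x)) = 2 ^ card (kernel hh) * pmf p y"
      by simp
  qed
  also have "\<dots> = 2 ^ card (kernel hh) * (\<Sum>y\<in>?b ` ?A. pmf p y)"
    by (simp add: sum_distrib_left)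
  finally show ?thesis .
qed

lemma part_a:
  assumes "length (fst hh) = l" "length (snd hh) = l"
  shows "(SUP f :: bool list \<times> bool list \<Rightarrow> bool list pmf.
        measure_pmf.expectation (pmf_of_set (bitstrings l)) (\<lambda>x. pmf (f hh) (boxplus x hh)))
      = 2 powr (real (card (kernel hh)) - real l)"
proof (rule sup_attained)
  let ?A = "bitstrings l" and ?b = "\<lambda>x. boxplus x hh"
  have E: "measure_pmf.expectation (pmf_of_set ?A) (\<lambda>x. pmf p (?b x))
     = 2 ^ card (kernel hh) * (\<Sum>y\<in>?b ` ?A. pmf p y) / 2 ^ l" for p
    by (simp add: integral_pmf_of_set bitstrings_fin bitstrings_ne bitstrings_card sum_decomp[OF assms])
  have P: "2 powr (real (card (kernel hh)) - real l) = 2 ^ card (kernel hh) / 2 ^ l"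
    by (simp add: powr_diff powr_realpow)
  let ?y0 = "?b (replicate l False)"
  have y0: "?y0 \<in> ?b ` ?A" by (auto simp: bitstrings_def)
  have "(\<Sum>y\<in>?b ` ?A. pmf (return_pmf ?y0) y) = measure_pmf.prob (return_pmf ?y0) (?b ` ?A)"
    by (rule measure_measure_pmf_finite[symmetric]) (simp add: bitstrings_fin)
  also have "\<dots> = 1" using y0 by simp
  finally have "(\<Sum>y\<in>?b ` ?A. pmf (return_pmf ?y0) y) = 1" .
  thus "measure_pmf.expectation (pmf_of_set ?A) (\<lambda>x. pmf ((\<lambda>_. return_pmf ?y0) hh) (?b x))
      = 2 powr (real (card (kernel hh)) - real l)"
    using E[of "return_pmf ?y0"] P by simp
  fix f :: "bool list \<times> bool list \<Rightarrow> bool list pmf"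
  have "(\<Sum>y\<in>?b ` ?A. pmf (f hh) y) = measure_pmf.prob (f hh) (?b ` ?A)"
    by (rule measure_measure_pmf_finite[symmetric]) (simp add: bitstrings_fin)
  also have "\<dots> \<le> 1" by simp
  finally have "(\<Sum>y\<in>?b ` ?A. pmf (f hh) y) \<le> 1" .
  hence "2 ^ card (kernel hh) * (\<Sum>y\<in>?b ` ?A. pmf (f hh) y) / 2 ^ l \<le> 2 ^ card (kernel hh) / (2::real) ^ l"
    by (simp add: divide_right_mono mult_left_le)
  thus "measure_pmf.expectation (pmf_of_set ?A) (\<lambda>x. pmf (f hh) (?b x))
      \<le> 2 powr (real (card (kernel hh)) - real l)"
    using E[of "f hh"] P by simp
qed

definition dec :: "bool option list \<Rightarrow> bool list \<times> bool list \<Rightarrow> bool list" where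
  "dec w hh = map (\<lambda>i. case w!i of None \<Rightarrow> fst hh ! i | Some b \<Rightarrow> if b then snd hh ! i else fst hh ! i)
      [0..<length w]"

lemma dec_wild: "dec (wildcard x (kernel hh)) hh = boxplus x hh"
  by (auto simp: dec_def wildcard_def boxplus_def kernel_def)

lemma chance_one:
  assumes "\<And>x. pmf (g (Xi l x)) (Theta l x) = 1"
  shows "guess_chance Xi Theta l = 1"
  unfolding guess_chance_def
proof (rule sup_attained)
  show "measure_pmf.expectation (pmf_of_set (bitstrings l)) (\<lambda>x. pmf (g (Xi l x)) (Theta l x)) = 1"
    using assms by (simp add: integral_pmf_of_set bitstrings_fin bitstrings_ne bitstrings_card)
qed (rule exp_le1)

theorem proposition5p6:
  fixes h :: "nat \<Rightarrow> bool list \<times> bool list"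
  assumes "\<And>l. length (fst (h l)) = l \<and> length (snd (h l)) = l"
  shows "(\<forall>l. guess_chance (\<lambda>l x. h l) (\<lambda>l x. boxplus x (h l)) l
               = 2 powr (real (card (kernel (h l))) - real l))
       \<and> neg_eq (guess_chance (\<lambda>l x. (x, h l)) (\<lambda>l x. boxplus x (h l)))
                (guess_chance (\<lambda>l x. (wildcard x (kernel (h l)), h l)) (\<lambda>l x. boxplus x (h l)))"
proof
  show "\<forall>l. guess_chance (\<lambda>l x. h l) (\<lambda>l x. boxplus x (h l)) l
               = 2 powr (real (card (kernel (h l))) - real l)"
    using part_a assms unfolding guess_chance_def by blast
  have 1: "guess_chance (\<lambda>l x. (x, h l)) (\<lambda>l x. boxplus x (h l)) l = 1" for l
    by (rule chance_one[where g = "\<lambda>(x,hh). return_pmf (boxplus x hh)"]) simp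
  have 2: "guess_chance (\<lambda>l x. (wildcard x (kernel (h l)), h l)) (\<lambda>l x. boxplus x (h l)) l = 1" for l
    by (rule chance_one[where g = "\<lambda>(w,hh). return_pmf (dec w hh)"]) (simp add: dec_wild)
  show "neg_eq (guess_chance (\<lambda>l x. (x, h l)) (\<lambda>l x. boxplus x (h l)))
                (guess_chance (\<lambda>l x. (wildcard x (kernel (h l)), h l)) (\<lambda>l x. boxplus x (h l)))"
    unfolding neg_eq_def negligible_def using 1 2 by simp
qed

end
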